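(* Let $\mathcal V$ be a finite-dimensional complex vector space and $\psi:\mathbb C\to\mathrm{End}(\mathcal V)$ a rational function, regular at $0$ and $\infty$, with $\psi(0)=1$ and $[\psi(w),\psi(w')]=0$ for all $w,w'$. Let $\sigma(\psi)\subset\mathbb C^\times$ be the set of poles of $\psi(w)^{\pm1}$ and $\mathsf Y(\psi)=\bigcup_{\alpha\in\sigma(\psi)}[\alpha,\infty)$, where $[\alpha,\infty)=\{t\alpha:t\in\mathbb R_{\ge1}\}$. Then there is a unique single-valued holomorphic function $H:\mathbb C\setminus\mathsf Y(\psi)\to\mathrm{End}(\mathcal V)$ with $\exp(H(w))=\psi(w)$ and $H(0)=0$. Moreover $[H(w),H(w')]=0$ for all $w,w'$, and $H'(w)=\psi(w)^{-1}\psi'(w)$. *)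

theory Defs
  imports "HOL-Complex_Analysis.Complex_Analysis"
begin

text \<open>End(V) for a finite-dimensional complex vector space V is modelled by square
  complex matrices indexed by a finite type 'n (dim V = CARD('n)), with matrix product.\<close>

definition mat_pow :: "complex^'n^'n \<Rightarrow> nat \<Rightarrow> complex^'n^'n" where
  "mat_pow A k = (((**) A) ^^ k) (mat 1)"

definition mat_exp :: "complex^'n^'n \<Rightarrow> complex^'n^'n" where
  "mat_exp A = (\<Sum>k. (inverse (fact k) :: real) *\<^sub>R mat_pow A k)"

definition rational_mat_fun :: "(complex \<Rightarrow> complex^'n^'n) \<Rightarrow> bool" where
  "rational_mat_fun \<psi> \<longleftrightarrow> (\<exists>(P :: complex poly^'n^'n) q. q \<noteq> 0 \<and>
     (\<forall>w. poly q w \<noteq> 0 \<longrightarrow> \<psi> w = (\<chi> i j. poly (P $ i $ j) w / poly q w)))"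

definition mat_pole :: "(complex \<Rightarrow> complex^'n^'n) \<Rightarrow> complex \<Rightarrow> bool" where
  "mat_pole f z \<longleftrightarrow> (\<exists>i j. is_pole (\<lambda>w. f w $ i $ j) z)"

definition pole_set :: "(complex \<Rightarrow> complex^'n^'n) \<Rightarrow> complex set" where
  "pole_set \<psi> = {z. z \<noteq> 0 \<and> (mat_pole \<psi> z \<or> mat_pole (\<lambda>w. matrix_inv (\<psi> w)) z)}"

definition ray :: "complex \<Rightarrow> complex set" where
  "ray \<alpha> = {complex_of_real t * \<alpha> | t. t \<ge> 1}"

definition Yset :: "(complex \<Rightarrow> complex^'n^'n) \<Rightarrow> complex set" where
  "Yset \<psi> = (\<Union>\<alpha>\<in>pole_set \<psi>. ray \<alpha>)"

definition mat_deriv :: "(complex \<Rightarrow> complex^'n^'n) \<Rightarrow> complex \<Rightarrow> complex^'n^'n" where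
  "mat_deriv f w = (\<chi> i j. deriv (\<lambda>z. f z $ i $ j) w)"

definition mat_holomorphic_on :: "(complex \<Rightarrow> complex^'n^'n) \<Rightarrow> complex set \<Rightarrow> bool" where
  "mat_holomorphic_on f S \<longleftrightarrow> (\<forall>i j. (\<lambda>z. f z $ i $ j) holomorphic_on S)"

definition log_branch :: "(complex \<Rightarrow> complex^'n^'n) \<Rightarrow> (complex \<Rightarrow> complex^'n^'n) \<Rightarrow> bool" where
  "log_branch \<psi> H \<longleftrightarrow> mat_holomorphic_on H (- Yset \<psi>) \<and>
     (\<forall>w \<in> - Yset \<psi>. mat_exp (H w) = \<psi> w) \<and> H 0 = 0"

end

theory Submission
  imports Defs
begin


lemma mvlin_scaleR: "(A::complex^'n^'m) *v (r *\<^sub>R x) = r *\<^sub>R (A *v x)"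
  by (simp add: vec_eq_iff matrix_vector_mult_def scaleR_sum_right)

lemma norm_vec_le_sum: "norm (x::complex^'n) \<le> (\<Sum>i\<in>UNIV. norm (x$i))"
  unfolding norm_vec_def by (rule L2_set_le_sum) auto

lemma mv_bound: "norm ((A::complex^'n^'m) *v x) \<le> (\<Sum>i\<in>UNIV. \<Sum>j\<in>UNIV. norm (A$i$j)) * norm x"
proof -
  have "norm (A *v x) \<le> (\<Sum>i\<in>UNIV. norm ((A *v x)$i))" by (rule norm_vec_le_sum)
  also have "\<dots> \<le> (\<Sum>i\<in>UNIV. \<Sum>j\<in>UNIV. norm (A$i$j) * norm x)"
  proof (rule sum_mono)
    fix i
    have "norm ((A *v x)$i) = norm (\<Sum>j\<in>UNIV. A$i$j * x$j)" by (simp add: matrix_vector_mult_def)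
    also have "\<dots> \<le> (\<Sum>j\<in>UNIV. norm (A$i$j * x$j))" by (rule norm_sum)
    also have "\<dots> \<le> (\<Sum>j\<in>UNIV. norm (A$i$j) * norm x)"
      by (rule sum_mono) (simp add: norm_mult mult_left_mono[OF Finite_Cartesian_Product.norm_nth_le norm_ge_zero])
    finally show "norm ((A *v x)$i) \<le> (\<Sum>j\<in>UNIV. norm (A$i$j) * norm x)" .
  qed
  finally show ?thesis
    by (simp add: sum_distrib_right)
qed

lemma mv_bl: "bounded_linear (\<lambda>x::complex^'n. (A::complex^'n^'m) *v x)"
  apply (rule bounded_linear_intro[where K="\<Sum>i\<in>UNIV. \<Sum>j\<in>UNIV. norm (A$i$j)"])
    apply (simp add: matrix_vector_right_distrib)
   apply (simp add: mvlin_scaleR)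
  using mv_bound by (metis mult.commute)

lemma norm_axis_c [simp]: "norm (axis j (1::complex)) = 1"
proof -
  have "(\<Sum>i\<in>UNIV. (norm ((axis j (1::complex))$i))\<^sup>2) = (\<Sum>i\<in>UNIV. if i = j then 1 else 0)"
    by (rule sum.cong) (auto simp: axis_def)
  thus ?thesis by (simp add: norm_vec_def L2_set_def)
qed

lemma onorm_entry: "norm ((A::complex^'n^'m)$i$j) \<le> onorm (\<lambda>x. A *v x)"
proof -
  have "(A *v axis j 1)$i = A$i$j"
    by (simp add: matrix_vector_mult_def axis_def if_distrib cong: if_cong)
  hence "norm (A$i$j) \<le> norm (A *v axis j 1)" using Finite_Cartesian_Product.norm_nth_le[of "A *v axis j 1" i] by simp
  also have "\<dots> \<le> onorm (\<lambda>x. A *v x) * norm (axis j (1::complex))" by (rule onorm[OF mv_bl])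
  finally show ?thesis by simp
qed

lemma onorm_le_entries: "onorm (\<lambda>x. (A::complex^'n^'m) *v x) \<le> (\<Sum>i\<in>UNIV. \<Sum>j\<in>UNIV. norm (A$i$j))"
  by (rule onorm_le) (rule mv_bound)




typedef ('a::finite) cm = "UNIV :: (complex^'a^'a) set" morphisms rep cmabs by auto
setup_lifting type_definition_cm

lemma rep_inject': "x = y \<longleftrightarrow> rep x = rep y" by (simp add: rep_inject)

instantiation cm :: (finite) ring_1
begin
lift_definition zero_cm :: "'a cm" is "0" .
lift_definition one_cm :: "'a cm" is "mat 1" .
lift_definition plus_cm :: "'a cm \<Rightarrow> 'a cm \<Rightarrow> 'a cm" is "(+)" .
lift_definition minus_cm :: "'a cm \<Rightarrow> 'a cm \<Rightarrow> 'a cm" is "(-)" .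
lift_definition uminus_cm :: "'a cm \<Rightarrow> 'a cm" is "uminus" .
lift_definition times_cm :: "'a cm \<Rightarrow> 'a cm \<Rightarrow> 'a cm" is "(**)" .
instance
proof
  fix a b c :: "'a cm"
  show "a * b * c = a * (b * c)" by transfer (simp add: matrix_mul_assoc)
  show "1 * a = a" by transfer simp
  show "a * 1 = a" by transfer simp
  show "a + b + c = a + (b + c)" by transfer simp
  show "a + b = b + a" by transfer (simp add: add.commute)
  show "0 + a = a" by transfer simp
  show "- a + a = 0" by transfer simp
  show "a - b = a + - b" by transfer simp
  show "(a + b) * c = a * c + b * c" by transfer (simp add: vec_eq_iff matrix_matrix_mult_def distrib_right sum.distrib)
  show "a * (b + c) = a * b + a * c" by transfer (simp add: matrix_add_ldistrib)
  show "(0::'a cm) \<noteq> 1"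
  proof transfer
    obtain i :: 'a where True by blast
    have "(mat 1 :: complex^'a^'a) $ i $ i = 1" by (simp add: mat_def)
    thus "(0::complex^'a^'a) \<noteq> mat 1" by (metis zero_index zero_neq_one)
  qed
qed
end

instantiation cm :: (finite) real_vector
begin
lift_definition scaleR_cm :: "real \<Rightarrow> 'a cm \<Rightarrow> 'a cm" is "scaleR" .
instance
  by standard (transfer, simp add: scaleR_add_right scaleR_add_left)+
end

instance cm :: (finite) real_algebra_1
  by standard (transfer, simp add: scalar_matrix_assoc matrix_scalar_ac)+

instantiation cm :: (finite) real_normed_algebra_1
begin
definition norm_cm :: "'a cm \<Rightarrow> real" where "norm_cm x = onorm (\<lambda>v. rep x *v v)"
definition sgn_cm :: "'a cm \<Rightarrow> 'a cm" where "sgn_cm x = x /\<^sub>R norm x"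
definition dist_cm :: "'a cm \<Rightarrow> 'a cm \<Rightarrow> real" where "dist_cm x y = norm (x - y)"
definition uniformity_cm :: "('a cm \<times> 'a cm) filter" where
  "uniformity_cm = (INF e\<in>{0 <..}. principal {(x, y). dist x y < e})"
definition open_cm :: "'a cm set \<Rightarrow> bool" where
  "open_cm U \<longleftrightarrow> (\<forall>x\<in>U. eventually (\<lambda>(x', y). x' = x \<longrightarrow> y \<in> U) uniformity)"
instance
proof
  fix r :: real and x y :: "'a cm"
  show "(norm x = 0) = (x = 0)"
  proof
    assume "norm x = 0"
    hence "onorm (\<lambda>v. rep x *v v) = 0" by (simp add: norm_cm_def)
    hence "\<forall>v. rep x *v v = 0" using onorm_eq_0[OF mv_bl[of "rep x"]] by blast
    hence "rep x = 0" by (metis matrix_eq matrix_vector_mult_0)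
    thus "x = 0" by (simp add: rep_inject' zero_cm.rep_eq)
  next
    assume "x = 0" thus "norm x = 0" by (simp add: norm_cm_def zero_cm.rep_eq onorm_zero)
  qed
  show "norm (x + y) \<le> norm x + norm y"
    unfolding norm_cm_def plus_cm.rep_eq matrix_vector_mult_add_rdistrib
    by (rule onorm_triangle[OF mv_bl mv_bl])
  show "norm (r *\<^sub>R x) = \<bar>r\<bar> * norm x"
  proof -
    have "(\<lambda>v. rep (r *\<^sub>R x) *v v) = (\<lambda>v. r *\<^sub>R (rep x *v v))"
      by (simp add: scaleR_cm.rep_eq fun_eq_iff vec_eq_iff matrix_vector_mult_def scaleR_sum_right)
    thus ?thesis by (simp add: norm_cm_def onorm_scaleR[OF mv_bl])
  qed
  show "norm (x * y) \<le> norm x * norm y"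
  proof -
    have "(\<lambda>v. rep (x * y) *v v) = (\<lambda>v. rep x *v v) \<circ> (\<lambda>v. rep y *v v)"
      by (simp add: times_cm.rep_eq fun_eq_iff matrix_vector_mul_assoc)
    thus ?thesis unfolding norm_cm_def by (metis onorm_compose[OF mv_bl mv_bl])
  qed
  show "norm (1::'a cm) = 1"
    by (simp add: norm_cm_def one_cm.rep_eq onorm_id)
qed (simp_all add: sgn_cm_def dist_cm_def uniformity_cm_def open_cm_def)
end

lemma norm_cm_entry: "norm (rep x $ i $ j) \<le> norm x"
  unfolding norm_cm_def by (rule onorm_entry)

lemma norm_cm_le: "norm x \<le> (\<Sum>i\<in>UNIV. \<Sum>j\<in>UNIV. norm (rep x $ i $ j))"
  unfolding norm_cm_def by (rule onorm_le_entries)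

lemma rep_diff: "rep (x - y) = rep x - rep y" by (simp add: minus_cm.rep_eq)

lemma tendsto_cm_iff:
  fixes f :: "'b \<Rightarrow> 'n::finite cm"
  shows "(f \<longlongrightarrow> L) F \<longleftrightarrow> (\<forall>i j. ((\<lambda>x. rep (f x) $ i $ j) \<longlongrightarrow> rep L $ i $ j) F)"
proof
  assume "(f \<longlongrightarrow> L) F"
  hence "((\<lambda>x. norm (f x - L)) \<longlongrightarrow> 0) F" using tendsto_norm_zero_iff by (metis Lim_null tendsto_norm_zero)
  show "\<forall>i j. ((\<lambda>x. rep (f x) $ i $ j) \<longlongrightarrow> rep L $ i $ j) F"
  proof (intro allI)
    fix i j
    have "((\<lambda>x. rep (f x) $ i $ j - rep L $ i $ j) \<longlongrightarrow> 0) F"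
    proof (rule Lim_null_comparison)
      show "\<forall>\<^sub>F x in F. norm (rep (f x) $ i $ j - rep L $ i $ j) \<le> norm (f x - L)"
        using norm_cm_entry[of "f _ - L" i j] by (simp add: rep_diff)
    qed fact
    thus "((\<lambda>x. rep (f x) $ i $ j) \<longlongrightarrow> rep L $ i $ j) F" by (simp add: Lim_null[symmetric])
  qed
next
  assume H: "\<forall>i j. ((\<lambda>x. rep (f x) $ i $ j) \<longlongrightarrow> rep L $ i $ j) F"
  have "((\<lambda>x. f x - L) \<longlongrightarrow> 0) F"
  proof (rule Lim_null_comparison)
    show "\<forall>\<^sub>F x in F. norm (f x - L) \<le> (\<Sum>i\<in>UNIV. \<Sum>j\<in>UNIV. norm (rep (f x) $ i $ j - rep L $ i $ j))"
      using norm_cm_le[of "f _ - L"] by (simp add: rep_diff)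
    show "((\<lambda>x. \<Sum>i\<in>UNIV. \<Sum>j\<in>UNIV. norm (rep (f x) $ i $ j - rep L $ i $ j)) \<longlongrightarrow> 0) F"
    proof -
      have "((\<lambda>x. \<Sum>i\<in>UNIV. \<Sum>j\<in>UNIV. norm (rep (f x) $ i $ j - rep L $ i $ j)) \<longlongrightarrow>
              (\<Sum>i\<in>(UNIV::'n set). \<Sum>j\<in>(UNIV::'n set). norm (rep L $ i $ j - rep L $ i $ j))) F"
        using H by (intro tendsto_sum tendsto_norm tendsto_diff tendsto_const) auto
      thus ?thesis by simp
    qed
  qed
  thus "(f \<longlongrightarrow> L) F" by (simp add: Lim_null[symmetric])
qed

instance cm :: (finite) banach
proof
  fix X :: "nat \<Rightarrow> 'a cm"
  assume C: "Cauchy X"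
  have "\<forall>i j. \<exists>l. (\<lambda>n. rep (X n) $ i $ j) \<longlonglongrightarrow> l"
  proof (intro allI)
    fix i j
    have "Cauchy (\<lambda>n. rep (X n) $ i $ j)"
    proof (rule metric_CauchyI)
      fix e :: real assume "e > 0"
      then obtain M where M: "\<forall>m\<ge>M. \<forall>n\<ge>M. dist (X m) (X n) < e" using C metric_CauchyD by blast
      show "\<exists>M. \<forall>m\<ge>M. \<forall>n\<ge>M. dist (rep (X m) $ i $ j) (rep (X n) $ i $ j) < e"
      proof (intro exI allI impI)
        fix m n assume "m \<ge> M" "n \<ge> M"
        hence "dist (X m) (X n) < e" using M by blast
        moreover have "dist (rep (X m) $ i $ j) (rep (X n) $ i $ j) \<le> dist (X m) (X n)"
          using norm_cm_entry[of "X m - X n" i j] by (simp add: dist_norm rep_diff)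
        ultimately show "dist (rep (X m) $ i $ j) (rep (X n) $ i $ j) < e" by linarith
      qed
    qed
    thus "\<exists>l. (\<lambda>n. rep (X n) $ i $ j) \<longlonglongrightarrow> l" using Cauchy_convergent_iff convergent_def by blast
  qed
  then obtain l where l: "\<And>i j. (\<lambda>n. rep (X n) $ i $ j) \<longlonglongrightarrow> l i j" by metis
  have "X \<longlonglongrightarrow> cmabs (\<chi> i j. l i j)"
    unfolding tendsto_cm_iff by (simp add: cmabs_inverse l)
  thus "convergent X" by (auto simp: convergent_def)
qed




lemma rep_sum: "rep (sum f A) = (\<Sum>a\<in>A. rep (f a))"
  by (induction A rule: infinite_finite_induct) (simp_all add: zero_cm.rep_eq plus_cm.rep_eq)

lemma rep_power: "rep (x ^ k) = mat_pow (rep x) k"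
  by (induction k) (simp_all add: mat_pow_def one_cm.rep_eq times_cm.rep_eq)

lemma rep_cmabs [simp]: "rep (cmabs A) = A" by (simp add: cmabs_inverse)
lemma cmabs_rep [simp]: "cmabs (rep x) = x" by (simp add: rep_inverse)

lemma mat_exp_rep: "mat_exp (rep x) = rep (exp x)"
proof -
  have s: "(\<lambda>n. x ^ n /\<^sub>R fact n) sums exp x" by (rule exp_converges)
  have "(\<lambda>k. (inverse (fact k) :: real) *\<^sub>R mat_pow (rep x) k) sums rep (exp x)"
    unfolding sums_def
  proof (rule vec_tendstoI, rule vec_tendstoI)
    fix i j
    from s have "(\<lambda>n. \<Sum>k<n. x ^ k /\<^sub>R fact k) \<longlonglongrightarrow> exp x" by (simp add: sums_def)
    hence "(\<lambda>n. rep (\<Sum>k<n. x ^ k /\<^sub>R fact k) $ i $ j) \<longlonglongrightarrow> rep (exp x) $ i $ j"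
      by (simp add: tendsto_cm_iff)
    thus "(\<lambda>n. (\<Sum>k<n. (inverse (fact k) :: real) *\<^sub>R mat_pow (rep x) k) $ i $ j) \<longlonglongrightarrow> rep (exp x) $ i $ j"
      by (simp add: rep_sum scaleR_cm.rep_eq rep_power)
  qed
  thus ?thesis unfolding mat_exp_def by (simp add: sums_unique[symmetric])
qed

lemma mat_exp_cmabs: "mat_exp A = rep (exp (cmabs A))"
  using mat_exp_rep[of "cmabs A"] by simp

lemma sum_if_mult: fixes y :: "'n::finite \<Rightarrow> complex" shows "(\<Sum>k\<in>UNIV. (if i = k then c else 0) * y k) = (c::complex) * y i"
proof -
  have "(\<Sum>k\<in>UNIV. (if i = k then c else 0) * y k) = (\<Sum>k\<in>UNIV. if k = i then c * y k else 0)"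
    by (rule sum.cong) auto
  also have "\<dots> = c * y i" by simp
  finally show ?thesis .
qed

definition cs :: "complex \<Rightarrow> 'n::finite cm" where "cs c = cmabs (mat c)"

lemma rep_cs: "rep (cs c) = mat c" by (simp add: cs_def)

lemma rep_mult_cs: "rep (x * cs c) $ i $ j = rep x $ i $ j * c"
  by (simp add: times_cm.rep_eq rep_cs matrix_matrix_mult_def mat_def if_distrib cong: if_cong)

lemma rep_cs_mult: "rep (cs c * x) $ i $ j = c * rep x $ i $ j"
proof -
  have "rep (cs c * x) $ i $ j = (\<Sum>k\<in>UNIV. (if i = k then c else 0) * rep x $ k $ j)"
    unfolding times_cm.rep_eq rep_cs matrix_matrix_mult_def mat_def by simp
  also have "\<dots> = c * rep x $ i $ j" by (rule sum_if_mult)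
  finally show ?thesis .
qed

lemma cs_commute: "cs c * x = x * cs c"
  by (simp add: rep_inject' vec_eq_iff rep_mult_cs rep_cs_mult mult.commute)

lemma cs_mult: "cs a * cs b = cs (a * b)"
  by (simp add: rep_inject' vec_eq_iff rep_mult_cs rep_cs mat_def)

lemma cs_one [simp]: "cs 1 = 1" by (simp add: cs_def one_cm_def)
lemma cs_zero [simp]: "cs 0 = 0" by (simp add: cs_def zero_cm_def)

lemma norm_cs: "norm (cs c :: 'n::finite cm) \<le> real CARD('n) * norm c"
proof -
  have "norm (cs c :: 'n cm) \<le> (\<Sum>i\<in>UNIV. \<Sum>j\<in>UNIV. norm (rep (cs c :: 'n cm) $ i $ j))" by (rule norm_cm_le)
  also have "\<dots> = (\<Sum>i\<in>(UNIV::'n set). norm c)"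
  proof (rule sum.cong)
    fix i :: 'n
    have "(\<Sum>j\<in>UNIV. norm (rep (cs c :: 'n cm) $ i $ j)) = (\<Sum>j\<in>UNIV. if j = i then norm c else 0)"
      by (rule sum.cong) (auto simp: rep_cs mat_def)
    thus "(\<Sum>j\<in>UNIV. norm (rep (cs c :: 'n cm) $ i $ j)) = norm c" by simp
  qed simp
  finally show ?thesis by simp
qed

lemma exp_remainder:
  fixes Z :: "'a::{real_normed_algebra_1,banach}"
  assumes "norm Z < 1"
  shows "norm (exp Z - 1 - Z) \<le> norm Z ^ 2 / (1 - norm Z)"
proof -
  let ?r = "norm Z"
  have "exp Z - 1 - Z = (\<Sum>n. inverse (fact (n + 2)) *\<^sub>R (Z ^ (n + 2)))"
    using exp_first_two_terms[of Z] by (simp add: algebra_simps)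
  also have "norm \<dots> \<le> (\<Sum>n. ?r ^ 2 * ?r ^ n)"
  proof (rule norm_suminf_le)
    fix n
    have a: "norm (Z^(n+2)) \<le> ?r^(n+2)" by (rule norm_power_ineq)
    have b: "inverse (fact (n+2) :: real) \<le> 1"
    proof -
      have "inverse (fact (n+2) :: real) \<le> inverse 1"
        by (rule le_imp_inverse_le) (rule fact_ge_1, simp)
      thus ?thesis by simp
    qed
    have "norm (inverse (fact (n + 2)) *\<^sub>R (Z ^ (n + 2))) = inverse (fact (n+2)) * norm (Z ^ (n+2))"
      by (simp only: norm_scaleR) simp
    also have "\<dots> \<le> 1 * ?r^(n+2)"
      by (rule mult_mono[OF b a]) simp_all
    also have "1 * ?r^(n+2) = ?r ^ 2 * ?r ^ n" by (simp add: power_add power2_eq_square mult.commute)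
    finally show "norm (inverse (fact (n + 2)) *\<^sub>R (Z ^ (n + 2))) \<le> ?r ^ 2 * ?r ^ n" .
    show "summable (\<lambda>n. ?r ^ 2 * ?r ^ n)"
      using assms by (intro summable_mult summable_geometric) simp
  qed
  also have "(\<Sum>n. ?r ^ 2 * ?r ^ n) = ?r ^ 2 / (1 - ?r)"
    using assms by (simp add: suminf_mult suminf_geometric summable_geometric)
  finally show ?thesis .
qed

lemma exp_eq_one_small:
  fixes Z :: "'a::{real_normed_algebra_1,banach}"
  assumes "norm Z < 1/2" "exp Z = 1"
  shows "Z = 0"
proof (rule ccontr)
  assume "Z \<noteq> 0"
  let ?r = "norm Z"
  have r: "0 < ?r" "?r < 1/2" using assms \<open>Z \<noteq> 0\<close> by auto
  have "?r = norm (exp Z - 1 - Z)" using assms by (simp add: norm_minus_commute)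
  also have "\<dots> \<le> ?r ^ 2 / (1 - ?r)" using exp_remainder[of Z] r by simp
  finally have "?r * (1 - ?r) \<le> ?r ^ 2" using r by (simp add: field_simps)
  hence "?r * (1 - ?r) \<le> ?r * ?r" by (simp add: power2_eq_square)
  hence "1 - ?r \<le> ?r" using r by simp
  thus False using r by simp
qed




definition cder :: "(complex \<Rightarrow> 'n::finite cm) \<Rightarrow> 'n cm \<Rightarrow> complex \<Rightarrow> bool" where
  "cder f D z \<longleftrightarrow> ((\<lambda>u. (f u - f z) * cs (inverse (u - z))) \<longlongrightarrow> D) (at z)"

lemma cder_iff: "cder f D z \<longleftrightarrow> (\<forall>i j. ((\<lambda>u. rep (f u) $ i $ j) has_field_derivative rep D $ i $ j) (at z))"
  unfolding cder_def tendsto_cm_iff has_field_derivative_iff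
  by (simp add: rep_mult_cs rep_diff divide_inverse)

lemma cder_cont: assumes "cder f D z" shows "(f \<longlongrightarrow> f z) (at z)"
  unfolding tendsto_cm_iff
proof (intro allI)
  fix i j
  from assms have "((\<lambda>u. rep (f u) $ i $ j) has_field_derivative rep D $ i $ j) (at z)"
    by (simp add: cder_iff)
  hence "isCont (\<lambda>u. rep (f u) $ i $ j) z" by (rule DERIV_isCont)
  thus "((\<lambda>u. rep (f u) $ i $ j) \<longlongrightarrow> rep (f z) $ i $ j) (at z)" by (simp add: isCont_def)
qed

lemma cder_const: "cder (\<lambda>u. c) 0 z" by (simp add: cder_def)

lemma cder_add: "cder f Df z \<Longrightarrow> cder g Dg z \<Longrightarrow> cder (\<lambda>u. f u + g u) (Df + Dg) z"
  by (simp add: cder_iff plus_cm.rep_eq DERIV_add)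

lemma cder_diff: "cder f Df z \<Longrightarrow> cder g Dg z \<Longrightarrow> cder (\<lambda>u. f u - g u) (Df - Dg) z"
  by (simp add: cder_iff rep_diff DERIV_diff)

lemma cder_minus: "cder f Df z \<Longrightarrow> cder (\<lambda>u. - f u) (- Df) z"
  by (simp add: cder_iff uminus_cm.rep_eq DERIV_minus)

lemma cder_mult:
  assumes f: "cder f Df z" and g: "cder g Dg z"
  shows "cder (\<lambda>u. f u * g u) (Df * g z + f z * Dg) z"
proof -
  have eq: "(f u * g u - f z * g z) * cs c = ((f u - f z) * cs c) * g u + f z * ((g u - g z) * cs c)" for u c
  proof -
    have "(f u * g u - f z * g z) * cs c = (f u - f z) * (g u * cs c) + f z * ((g u - g z) * cs c)"
      by (simp add: algebra_simps)
    also have "g u * cs c = cs c * g u" by (simp add: cs_commute)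
    finally show ?thesis by (simp add: mult.assoc)
  qed
  have "((\<lambda>u. ((f u - f z) * cs (inverse (u - z))) * g u + f z * ((g u - g z) * cs (inverse (u - z))))
          \<longlongrightarrow> Df * g z + f z * Dg) (at z)"
    using f g cder_cont[OF g] unfolding cder_def by (intro tendsto_intros)
  thus ?thesis unfolding cder_def eq .
qed

lemma cder_unique: "cder f D1 z \<Longrightarrow> cder f D2 z \<Longrightarrow> D1 = D2"
  unfolding cder_def by (rule tendsto_unique[OF at_neq_bot])

lemma cder_cong:
  assumes "cder f D z" "eventually (\<lambda>u. f u = g u) (at z)" "f z = g z"
  shows "cder g D z"
  using assms(1) unfolding cder_def
  by (rule Lim_transform_eventually) (use assms(2,3) in \<open>auto elim: eventually_mono\<close>)

lemma cder_zero_const: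
  assumes "connected S" "open S" "\<And>z. z \<in> S \<Longrightarrow> cder f 0 z" "a \<in> S" "b \<in> S"
  shows "f b = f a"
proof -
  have "rep (f b) $ i $ j = rep (f a) $ i $ j" for i j
  proof -
    have "(\<lambda>u. rep (f u) $ i $ j) constant_on S"
    proof (rule has_field_derivative_0_imp_constant_on)
      fix z assume "z \<in> S"
      thus "((\<lambda>u. rep (f u) $ i $ j) has_field_derivative 0) (at z)"
        using assms(3)[of z] by (simp add: cder_iff zero_cm.rep_eq)
    qed (use assms in auto)
    thus ?thesis using assms(4,5) unfolding constant_on_def by metis
  qed
  thus ?thesis by (simp add: rep_inject' vec_eq_iff)
qed




lemma cder_exp:
  fixes g :: "complex \<Rightarrow> 'n::finite cm"
  assumes g: "cder g D z" and comm: "eventually (\<lambda>u. g u * g z = g z * g u) (at z)"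
  shows "cder (\<lambda>u. exp (g u)) (exp (g z) * D) z"
proof -
  define N where "N = real CARD('n)"
  define c where "c u = (cs (inverse (u - z)) :: 'n cm)" for u
  define Q where "Q u = (g u - g z) * c u" for u
  define R where "R u = (exp (g u - g z) - 1 - (g u - g z)) * c u" for u
  have Q: "(Q \<longlongrightarrow> D) (at z)" using g unfolding cder_def Q_def c_def .
  have gc: "(g \<longlongrightarrow> g z) (at z)" by (rule cder_cont[OF g])
  hence dl: "((\<lambda>u. g u - g z) \<longlongrightarrow> 0) (at z)" by (simp add: Lim_null[symmetric])
  hence ndl: "((\<lambda>u. norm (g u - g z)) \<longlongrightarrow> 0) (at z)" by (simp add: tendsto_norm_zero)
  have ev1: "eventually (\<lambda>u. norm (g u - g z) < 1/2) (at z)"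
    using ndl by (rule order_tendstoD) simp
  have R0: "(R \<longlongrightarrow> 0) (at z)"
  proof (rule Lim_null_comparison)
    show "eventually (\<lambda>u. norm (R u) \<le> norm (g u - g z) * (norm (Q u) * N * N) / (1 - norm (g u - g z))) (at z)"
      using ev1 eventually_neq_at_within[of z z UNIV]
    proof eventually_elim
      case (elim u)
      let ?d = "g u - g z"
      have uz: "u \<noteq> z" using elim by auto
      have d: "?d = Q u * cs (u - z)"
        using uz by (simp add: Q_def c_def mult.assoc cs_mult)
      have nd: "norm ?d \<le> norm (Q u) * (N * norm (u - z))"
        unfolding d N_def by (rule order_trans[OF norm_mult_ineq]) (simp add: mult_left_mono norm_cs)
      have nc: "norm (c u) \<le> N * inverse (norm (u - z))"
        unfolding c_def N_def using norm_cs[of "inverse (u - z)"] by (simp add: norm_inverse)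
      have "norm (R u) \<le> norm (exp ?d - 1 - ?d) * norm (c u)"
        unfolding R_def by (rule norm_mult_ineq)
      also have "\<dots> \<le> (norm ?d ^ 2 / (1 - norm ?d)) * (N * inverse (norm (u - z)))"
        using exp_remainder[of ?d] elim nc by (intro mult_mono) auto
      also have "\<dots> = norm ?d * (norm ?d * inverse (norm (u - z))) * N / (1 - norm ?d)"
        by (simp add: power2_eq_square)
      also have "\<dots> \<le> norm ?d * (norm (Q u) * N) * N / (1 - norm ?d)"
      proof -
        have "norm ?d * inverse (norm (u - z)) \<le> norm (Q u) * N"
          using nd uz by (simp add: field_simps)
        thus ?thesis using elim unfolding N_def
          by (intro divide_right_mono mult_right_mono mult_left_mono) auto
      qed
      finally show ?case by (simp add: mult.assoc)
    qed
    have "((\<lambda>u. norm (g u - g z) * (norm (Q u) * N * N) / (1 - norm (g u - g z))) \<longlongrightarrow>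
            0 * (norm D * N * N) / (1 - 0)) (at z)"
      by (intro tendsto_intros ndl Q) simp
    thus "((\<lambda>u. norm (g u - g z) * (norm (Q u) * N * N) / (1 - norm (g u - g z))) \<longlongrightarrow> 0) (at z)"
      by simp
  qed
  have lim: "((\<lambda>u. exp (g z) * (Q u + R u)) \<longlongrightarrow> exp (g z) * (D + 0)) (at z)"
    by (intro tendsto_intros Q R0)
  have "eventually (\<lambda>u. (exp (g u) - exp (g z)) * c u = exp (g z) * (Q u + R u)) (at z)"
    using comm
  proof eventually_elim
    case (elim u)
    have cm: "g z * (g u - g z) = (g u - g z) * g z" using elim by (simp add: algebra_simps)
    have "exp (g u) = exp (g z + (g u - g z))" by simp
    also have "\<dots> = exp (g z) * exp (g u - g z)" by (rule exp_add_commuting[OF cm])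
    finally have "exp (g u) - exp (g z) = exp (g z) * (exp (g u - g z) - 1)" by (simp add: algebra_simps)
    thus ?case by (simp add: Q_def R_def algebra_simps)
  qed
  hence "((\<lambda>u. (exp (g u) - exp (g z)) * c u) \<longlongrightarrow> exp (g z) * D) (at z)"
    using lim by (simp add: tendsto_cong)
  thus ?thesis unfolding cder_def c_def .
qed

lemma comm_exp_small:
  fixes X Y :: "'a::{real_normed_algebra_1,banach}"
  assumes r: "norm Y < 1/2" and XY: "X * exp Y = exp Y * X"
  shows "X * Y = Y * X"
proof -
  define D where "D = X * Y - Y * X"
  define C where "C n = X * Y ^ n - Y ^ n * X" for n
  let ?r = "norm Y"
  have rec: "C (Suc n) = C n * Y + Y ^ n * D" for n
  proof -
    have p: "Y ^ n * Y = Y * Y ^ n" by (rule power_commutes)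
    have "C n * Y + Y ^ n * D = X * (Y ^ n * Y) - (Y ^ n * Y) * X"
      by (simp add: C_def D_def ring_distribs mult.assoc)
    also have "\<dots> = C (Suc n)" by (simp add: C_def p)
    finally show ?thesis by simp
  qed
  have bnd: "norm (C (Suc n)) \<le> (real n + 1) * ?r ^ n * norm D" for n
  proof (induction n)
    case 0 show ?case by (simp add: C_def D_def)
  next
    case (Suc n)
    have "norm (C (Suc (Suc n))) \<le> norm (C (Suc n)) * ?r + ?r ^ Suc n * norm D"
      unfolding rec[of "Suc n"]
      by (rule order_trans[OF norm_triangle_ineq]) (intro add_mono norm_mult_ineq order_trans[OF norm_mult_ineq] mult_right_mono norm_power_ineq; simp)
    also have "\<dots> \<le> (real n + 1) * ?r ^ n * norm D * ?r + ?r ^ Suc n * norm D"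
      using Suc by (intro add_mono mult_right_mono) auto
    also have "\<dots> = (real (Suc n) + 1) * ?r ^ Suc n * norm D" by (simp add: algebra_simps)
    finally show ?case .
  qed
  have s: "(\<lambda>n. C n /\<^sub>R fact n) sums 0"
  proof -
    have e: "(\<lambda>n. Y ^ n /\<^sub>R fact n) sums exp Y" by (rule exp_converges)
    have "(\<lambda>n. X * (Y ^ n /\<^sub>R fact n) - (Y ^ n /\<^sub>R fact n) * X) sums (X * exp Y - exp Y * X)"
      by (intro sums_diff sums_mult sums_mult2 e)
    thus ?thesis using XY by (simp add: C_def scaleR_diff_right)
  qed
  hence "(\<lambda>i. C (i + 2) /\<^sub>R fact (i + 2)) sums (- (\<Sum>i<2. C i /\<^sub>R fact i))"
    by (subst sums_iff_shift) simp
  hence s2: "(\<lambda>i. C (i + 2) /\<^sub>R fact (i + 2)) sums (- D)"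
    by (simp add: C_def D_def eval_nat_numeral)
  have "norm (- D) \<le> (\<Sum>i. norm D * ?r * ?r ^ i)"
    unfolding sums_unique[OF s2]
  proof (rule norm_suminf_le)
    fix i
    have f: "real (i + 2) \<le> fact (i + 2)" using fact_ge_self[of "i+2"] by (metis of_nat_fact of_nat_le_iff)
    have fp: "0 < (fact (i + 2) :: real)" by simp
    have "norm (C (i + 2) /\<^sub>R fact (i + 2)) = norm (C (Suc (i + 1))) / fact (i + 2)"
      by (simp add: divide_inverse mult.commute)
    also have "\<dots> \<le> ((real (i + 1) + 1) * ?r ^ (i + 1) * norm D) / fact (i + 2)"
      by (intro divide_right_mono bnd) simp
    also have "\<dots> \<le> (fact (i + 2) * ?r ^ (i + 1) * norm D) / fact (i + 2)"
      using f by (intro divide_right_mono mult_right_mono) auto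
    also have "\<dots> = norm D * ?r * ?r ^ i" using fp by (simp add: mult.commute mult.left_commute)
    finally show "norm (C (i + 2) /\<^sub>R fact (i + 2)) \<le> norm D * ?r * ?r ^ i" .
  next
    show "summable (\<lambda>i. norm D * ?r * ?r ^ i)" using r by (intro summable_mult summable_geometric) simp
  qed
  also have "\<dots> = norm D * ?r / (1 - ?r)" using r by (simp add: suminf_mult suminf_geometric)
  finally have "norm D * (1 - ?r) \<le> norm D * ?r" using r by (simp add: field_simps)
  hence "norm D * (1 - 2 * ?r) \<le> 0" by (simp add: algebra_simps)
  moreover have "0 < 1 - 2 * ?r" using r by simp
  ultimately have "norm D \<le> 0" by (simp add: mult_le_0_iff)
  thus ?thesis by (simp add: D_def)
qed




lemma minv: "invertible (A::complex^'n^'n) \<Longrightarrow> A ** matrix_inv A = mat 1 \<and> matrix_inv A ** A = mat 1"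
  unfolding matrix_inv_def invertible_def by (rule someI_ex)

definition cnum :: "complex^'n^'n \<Rightarrow> 'n \<Rightarrow> 'n \<Rightarrow> complex" where
  "cnum A k j = det (\<chi> i l. if l = k then (if i = j then 1 else 0) else A$i$l)"

lemma inv_entry:
  fixes A :: "complex^'n^'n"
  assumes "det A \<noteq> 0"
  shows "matrix_inv A $ k $ j = cnum A k j / det A"
proof -
  have inv: "invertible A" using assms invertible_det_nz by blast
  define x where "x = matrix_inv A *v axis j 1"
  have "A *v x = axis j 1"
    unfolding x_def matrix_vector_mul_assoc using minv[OF inv] by simp
  hence "x = (\<chi> k. det(\<chi> i l. if l = k then (axis j 1)$i else A$i$l) / det A)"
    using cramer[OF assms] by blast
  hence "x $ k = det(\<chi> i l. if l = k then (axis j (1::complex))$i else A$i$l) / det A" by simp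
  moreover have "x $ k = matrix_inv A $ k $ j"
    by (simp add: x_def matrix_vector_mult_def axis_def if_distrib cong: if_cong)
  moreover have "(\<chi> i l. if l = k then (axis j (1::complex))$i else A$i$l) = (\<chi> i l. if l = k then (if i = j then 1 else 0) else A$i$l)"
    by (simp add: axis_def vec_eq_iff)
  ultimately show ?thesis by (simp add: cnum_def)
qed

lemma det_poly: "poly (det (P :: complex poly^'n^'n)) w = det (\<chi> i j. poly (P$i$j) w)"
  unfolding det_def by (simp add: poly_sum poly_prod)

lemma det_div:
  fixes a :: "'n::finite \<Rightarrow> 'n \<Rightarrow> complex"
  assumes "c \<noteq> 0"
  shows "det (\<chi> i j. a i j / c) * c ^ CARD('n) = det (\<chi> i j. a i j)"
proof -
  have "det (\<chi> i j. a i j / c) * c ^ CARD('n) =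
        (\<Sum>p\<in>{p. p permutes UNIV}. of_int (sign p) * (\<Prod>i\<in>UNIV. a i (p i) / c) * c ^ CARD('n))"
    unfolding det_def by (simp add: sum_distrib_right)
  also have "\<dots> = (\<Sum>p\<in>{p. p permutes UNIV}. of_int (sign p) * (\<Prod>i\<in>UNIV. a i (p i)))"
  proof (rule sum.cong)
    fix p
    have "(\<Prod>i\<in>UNIV. a i (p i) / c) = (\<Prod>i\<in>UNIV. a i (p i)) / c ^ CARD('n)"
      by (simp add: prod_dividef)
    thus "of_int (sign p) * (\<Prod>i\<in>UNIV. a i (p i) / c) * c ^ CARD('n) = of_int (sign p) * (\<Prod>i\<in>UNIV. a i (p i))"
      using assms by simp
  qed simp
  also have "\<dots> = det (\<chi> i j. a i j)" unfolding det_def by simp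
  finally show ?thesis .
qed

lemma det_holo:
  fixes M :: "complex \<Rightarrow> complex^'n^'n"
  assumes "\<And>i j. (\<lambda>w. M w $ i $ j) holomorphic_on S"
  shows "(\<lambda>w. det (M w :: complex^'n^'n)) holomorphic_on S"
  unfolding det_def using assms by (intro holomorphic_intros)

lemma cnum_holo:
  fixes M :: "complex \<Rightarrow> complex^'n^'n"
  assumes "\<And>i j. (\<lambda>w. M w $ i $ j) holomorphic_on S"
  shows "(\<lambda>w. cnum (M w :: complex^'n^'n) k j) holomorphic_on S"
  unfolding cnum_def
proof (rule det_holo)
  fix i j'
  show "(\<lambda>w. (\<chi> i l. if l = k then (if i = j then 1 else 0) else M w $ i $ l) $ i $ j') holomorphic_on S"
    by (cases "j' = k"; cases "i = j") (auto simp: assms)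
qed

lemma ev_notin_finite: "finite A \<Longrightarrow> eventually (\<lambda>w. w \<notin> A) (at (z::complex))"
proof -
  assume fA: "finite A"
  have "closed (A - {z})" using fA by (simp add: finite_imp_closed)
  hence "open (- (A - {z}))" by (rule open_Compl)
  hence "eventually (\<lambda>w. w \<in> - (A - {z})) (nhds z)" by (rule eventually_nhds_in_open) simp
  thus ?thesis unfolding eventually_at_filter by (rule eventually_mono) auto
qed




lemma isCont_entry: "isCont f z \<Longrightarrow> isCont (\<lambda>w. (f w :: complex^'n^'m) $ i $ j) z"
  unfolding isCont_def by (intro tendsto_vec_nth)

locale psi_ctx =
  fixes \<psi> :: "complex \<Rightarrow> complex^'n^'n" and P :: "complex poly^'n^'n" and q :: "complex poly"
  assumes qnz: "q \<noteq> 0"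
    and psiP: "\<And>w. poly q w \<noteq> 0 \<Longrightarrow> \<psi> w = (\<chi> i j. poly (P $ i $ j) w / poly q w)"
    and regular: "\<And>z. \<not> mat_pole \<psi> z \<Longrightarrow> isCont \<psi> z"
    and reg0: "\<not> mat_pole \<psi> 0"
    and psi0: "\<psi> 0 = mat 1"
    and comm: "\<And>w w'. \<not> mat_pole \<psi> w \<Longrightarrow> \<not> mat_pole \<psi> w' \<Longrightarrow> \<psi> w ** \<psi> w' = \<psi> w' ** \<psi> w"
begin

definition "Z = {w. poly q w = 0}"
definition "PP = {z. mat_pole \<psi> z}"

lemma finite_Z: "finite Z" unfolding Z_def using qnz by (rule poly_roots_finite)

lemma open_nZ: "open (- Z)" using finite_Z by (simp add: finite_imp_closed open_Compl)

lemma hol_nZ: "(\<lambda>w. \<psi> w $ i $ j) holomorphic_on - Z"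
proof -
  have "(\<lambda>w. poly (P $ i $ j) w / poly q w) holomorphic_on - Z"
    by (intro holomorphic_intros) (auto simp: Z_def)
  thus ?thesis by (rule holomorphic_transform) (simp add: psiP Z_def)
qed

lemma PP_Z: "PP \<subseteq> Z"
proof
  fix z assume "z \<in> PP"
  then obtain i j where "is_pole (\<lambda>w. \<psi> w $ i $ j) z" by (auto simp: PP_def mat_pole_def)
  thus "z \<in> Z" using not_is_pole_holomorphic[OF open_nZ _ hol_nZ] by blast
qed

lemma finite_PP: "finite PP" using PP_Z finite_Z finite_subset by blast

lemma open_nPP: "open (- PP)" using finite_PP by (simp add: finite_imp_closed open_Compl)

lemma hol_psi: "(\<lambda>w. \<psi> w $ i $ j) holomorphic_on - PP"
proof (rule no_isolated_singularity'[where K = "Z - PP"])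
  fix z assume z: "z \<in> Z - PP"
  hence "isCont \<psi> z" using regular by (auto simp: PP_def)
  hence "isCont (\<lambda>w. \<psi> w $ i $ j) z" by (rule isCont_entry)
  hence "continuous (at z within - PP) (\<lambda>w. \<psi> w $ i $ j)" by (rule continuous_at_imp_continuous_within)
  thus "((\<lambda>w. \<psi> w $ i $ j) \<longlongrightarrow> \<psi> z $ i $ j) (at z within - PP)"
    by (simp add: continuous_within)
next
  have "- PP - (Z - PP) = - Z" using PP_Z by blast
  thus "(\<lambda>w. \<psi> w $ i $ j) holomorphic_on - PP - (Z - PP)" using hol_nZ by simp
qed (use open_nPP finite_Z in auto)

lemma cont_psi: "z \<notin> PP \<Longrightarrow> isCont \<psi> z" using regular by (simp add: PP_def)

definition "D = det P"

lemma detD: "poly q w \<noteq> 0 \<Longrightarrow> det (\<psi> w) * poly q w ^ CARD('n) = poly D w"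
  using det_div[of "poly q w" "\<lambda>i j. poly (P $ i $ j) w"] by (simp add: psiP D_def det_poly)

lemma hol_det: "(\<lambda>w. det (\<psi> w)) holomorphic_on - PP"
  by (rule det_holo) (rule hol_psi)

lemma D_nz: "D \<noteq> 0"
proof
  assume D0: "D = 0"
  have "0 \<in> - PP" using reg0 by (simp add: PP_def)
  have "continuous_on (- PP) (\<lambda>w. det (\<psi> w))" using hol_det by (rule holomorphic_on_imp_continuous_on)
  hence "isCont (\<lambda>w. det (\<psi> w)) 0" using open_nPP \<open>0 \<in> - PP\<close> continuous_on_eq_continuous_at by blast
  hence "((\<lambda>w. det (\<psi> w)) \<longlongrightarrow> 1) (at 0)" by (simp add: isCont_def psi0)
  hence "eventually (\<lambda>w. det (\<psi> w) \<noteq> 0) (at 0)" by (rule tendsto_imp_eventually_ne) simp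
  moreover have "eventually (\<lambda>w. w \<notin> Z) (at 0)" using finite_Z by (rule ev_notin_finite)
  ultimately have "eventually (\<lambda>w. det (\<psi> w) \<noteq> 0 \<and> w \<notin> Z) (at (0::complex))" by eventually_elim auto
  then obtain w where w: "det (\<psi> w) \<noteq> 0" "w \<notin> Z" using eventually_happens'[OF at_neq_bot] by blast
  have "det (\<psi> w) * poly q w ^ CARD('n) = poly D w" using w detD[of w] by (simp add: Z_def)
  moreover have "poly q w ^ CARD('n) \<noteq> 0" using w by (simp add: Z_def)
  ultimately have "poly D w \<noteq> 0" using w(1) by (metis mult_eq_0_iff)
  thus False using D0 by simp
qed

definition "ZD = {w. poly D w = 0}"

lemma finite_ZD: "finite ZD" unfolding ZD_def using D_nz by (rule poly_roots_finite)

lemma det_nz_out: "w \<notin> Z \<Longrightarrow> w \<notin> ZD \<Longrightarrow> det (\<psi> w) \<noteq> 0"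
  using detD[of w] by (auto simp: Z_def ZD_def)

lemma inv_holo:
  assumes "open V" "V \<subseteq> - PP" "\<And>w. w \<in> V \<Longrightarrow> det (\<psi> w) \<noteq> 0"
  shows "(\<lambda>w. matrix_inv (\<psi> w) $ k $ j) holomorphic_on V"
proof -
  have "(\<lambda>w. cnum (\<psi> w) k j / det (\<psi> w)) holomorphic_on V"
    using assms by (intro holomorphic_intros cnum_holo det_holo holomorphic_on_subset[OF hol_psi]) auto
  thus ?thesis by (rule holomorphic_transform) (simp add: inv_entry assms)
qed

lemma pole_set_sub: "pole_set \<psi> \<subseteq> Z \<union> ZD"
proof
  fix z assume z: "z \<in> pole_set \<psi>"
  show "z \<in> Z \<union> ZD"
  proof (rule ccontr)
    assume nz: "z \<notin> Z \<union> ZD"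
    define V where "V = - (Z \<union> ZD)"
    have oV: "open V" unfolding V_def using finite_Z finite_ZD by (intro open_Compl finite_imp_closed) simp
    have VP: "V \<subseteq> - PP" using PP_Z by (auto simp: V_def)
    have "(\<lambda>w. matrix_inv (\<psi> w) $ k $ j) holomorphic_on V" for k j
      by (rule inv_holo[OF oV VP]) (auto simp: V_def det_nz_out)
    hence "\<not> is_pole (\<lambda>w. matrix_inv (\<psi> w) $ k $ j) z" for k j
      using not_is_pole_holomorphic[OF oV] nz by (auto simp: V_def)
    hence "\<not> mat_pole (\<lambda>w. matrix_inv (\<psi> w)) z" by (simp add: mat_pole_def)
    moreover have "\<not> mat_pole \<psi> z" using nz PP_Z by (auto simp: PP_def)
    ultimately show False using z by (simp add: pole_set_def)
  qed
qed

lemma finite_pole_set: "finite (pole_set \<psi>)"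
  using pole_set_sub finite_Z finite_ZD finite_subset by blast

lemma closed_ray: "\<alpha> \<noteq> 0 \<Longrightarrow> closed (ray \<alpha>)"
proof -
  assume a: "\<alpha> \<noteq> 0"
  have "ray \<alpha> = {z. Im (z / \<alpha>) = 0} \<inter> {z. 1 \<le> Re (z / \<alpha>)}"
  proof (intro set_eqI iffI)
    fix z assume "z \<in> ray \<alpha>"
    then obtain t where "z = complex_of_real t * \<alpha>" "t \<ge> 1" by (auto simp: ray_def)
    thus "z \<in> {z. Im (z / \<alpha>) = 0} \<inter> {z. 1 \<le> Re (z / \<alpha>)}" using a by simp
  next
    fix z assume z: "z \<in> {z. Im (z / \<alpha>) = 0} \<inter> {z. 1 \<le> Re (z / \<alpha>)}"
    have "z = complex_of_real (Re (z / \<alpha>)) * \<alpha>"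
      using z a by (metis (mono_tags, lifting) Int_iff complex_is_Real_iff mem_Collect_eq nonzero_eq_divide_eq of_real_Re)
    thus "z \<in> ray \<alpha>" using z unfolding ray_def by blast
  qed
  moreover have "closed {z. Im (z / \<alpha>) = 0}"
    by (intro closed_Collect_eq continuous_intros) (use a in auto)
  moreover have "closed {z. 1 \<le> Re (z / \<alpha>)}"
    by (intro closed_Collect_le continuous_intros) (use a in auto)
  ultimately show ?thesis by (simp add: closed_Int)
qed

definition "S = - Yset \<psi>"

lemma closed_Yset: "closed (Yset \<psi>)"
  unfolding Yset_def using finite_pole_set
  by (intro closed_UN) (auto intro: closed_ray simp: pole_set_def)

lemma open_S: "open S" unfolding S_def using closed_Yset by (simp add: open_Compl)

lemma zero_S: "0 \<in> S"
  by (auto simp: S_def Yset_def ray_def pole_set_def)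

lemma starlike_S: "starlike S"
  unfolding starlike_def
proof (intro bexI[OF _ zero_S] ballI subsetI)
  fix x y assume x: "x \<in> S" and y: "y \<in> closed_segment 0 x"
  then obtain u :: real where u: "0 \<le> u" "u \<le> 1" "y = u *\<^sub>R x" by (auto simp: closed_segment_def)
  show "y \<in> S"
  proof (rule ccontr)
    assume "y \<notin> S"
    then obtain \<alpha> t where at: "\<alpha> \<in> pole_set \<psi>" "t \<ge> 1" "y = complex_of_real t * \<alpha>"
      by (auto simp: S_def Yset_def ray_def)
    have a0: "\<alpha> \<noteq> 0" using at by (simp add: pole_set_def)
    have "u \<noteq> 0" using at u a0 by auto
    hence "x = complex_of_real (t / u) * \<alpha>" using at u by (simp add: scaleR_conv_of_real field_simps)
    moreover have "t / u \<ge> 1" using u at \<open>u \<noteq> 0\<close> by (simp add: field_simps)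
    ultimately have "x \<in> Yset \<psi>" using at unfolding Yset_def ray_def by blast
    thus False using x by (simp add: S_def)
  qed
qed

lemma conn_S: "connected S" using starlike_S by (rule starlike_imp_connected)

lemma S_nPP: "S \<subseteq> - PP"
proof
  fix z assume z: "z \<in> S"
  show "z \<in> - PP"
  proof (cases "z = 0")
    case True thus ?thesis using reg0 by (simp add: PP_def)
  next
    case False
    have "z \<in> ray z" unfolding ray_def by (rule CollectI, rule exI[of _ 1]) simp
    hence "z \<notin> pole_set \<psi>" using z by (auto simp: S_def Yset_def)
    thus ?thesis using False by (simp add: pole_set_def PP_def)
  qed
qed

end



lemma inv_comm:
  fixes a b x :: "'a::ring_1"
  assumes "a * b = 1" "b * a = 1" "a * x = x * a"
  shows "b * x = x * b"
proof -
  have "b * x = b * x * (a * b)" using assms by simp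
  also have "\<dots> = b * (x * a) * b" by (simp add: mult.assoc)
  also have "\<dots> = b * (a * x) * b" using assms by simp
  also have "\<dots> = (b * a) * x * b" by (simp add: mult.assoc)
  also have "\<dots> = x * b" using assms by simp
  finally show ?thesis .
qed

lemma rep_times: "rep (cmabs A * cmabs B) = A ** B" by (simp add: times_cm.rep_eq)

context psi_ctx
begin

lemma z_notin_pole_set: "z \<in> S \<Longrightarrow> z \<notin> pole_set \<psi>"
proof
  assume "z \<in> S" "z \<in> pole_set \<psi>"
  moreover have "z \<in> ray z" unfolding ray_def by (rule CollectI, rule exI[of _ 1]) simp
  ultimately show False by (auto simp: S_def Yset_def)
qed

lemma det_S: assumes z: "z \<in> S" shows "det (\<psi> z) \<noteq> 0"
proof (cases "z = 0")
  case True thus ?thesis by (simp add: psi0)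
next
  case z0: False
  show ?thesis
  proof
    assume d0: "det (\<psi> z) = 0"
    have zP: "z \<in> - PP" using z S_nPP by blast
    have ev: "eventually (\<lambda>w. w \<notin> Z \<union> ZD) (at z)"
      using finite_Z finite_ZD by (intro ev_notin_finite) simp
    have "\<exists>L. ((\<lambda>w. matrix_inv (\<psi> w) $ k $ j) \<longlongrightarrow> L) (at z)" for k j
    proof -
      have hN: "(\<lambda>w. cnum (\<psi> w) k j) holomorphic_on - PP" by (rule cnum_holo) (rule hol_psi)
      have hD: "(\<lambda>w. det (\<psi> w)) holomorphic_on - PP" by (rule hol_det)
      have "not_essential (\<lambda>w. cnum (\<psi> w) k j / det (\<psi> w)) z"
      proof (rule not_essential_divide)
        show "not_essential (\<lambda>w. cnum (\<psi> w) k j) z" by (rule not_essential_holomorphic[OF hN zP open_nPP])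
        show "not_essential (\<lambda>w. det (\<psi> w)) z" by (rule not_essential_holomorphic[OF hD zP open_nPP])
        show "isolated_singularity_at (\<lambda>w. cnum (\<psi> w) k j) z"
          by (rule isolated_singularity_at_holomorphic[OF holomorphic_on_subset[OF hN] open_nPP zP]) auto
        show "isolated_singularity_at (\<lambda>w. det (\<psi> w)) z"
          by (rule isolated_singularity_at_holomorphic[OF holomorphic_on_subset[OF hD] open_nPP zP]) auto
      qed
      moreover have "\<forall>\<^sub>F w in at z. cnum (\<psi> w) k j / det (\<psi> w) = matrix_inv (\<psi> w) $ k $ j"
        using ev by eventually_elim (simp add: inv_entry det_nz_out)
      ultimately have ne: "not_essential (\<lambda>w. matrix_inv (\<psi> w) $ k $ j) z" by (rule not_essential_transform)
      have "\<not> is_pole (\<lambda>w. matrix_inv (\<psi> w) $ k $ j) z"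
        using z_notin_pole_set[OF z] z0 by (auto simp: pole_set_def mat_pole_def)
      thus ?thesis using ne by (auto simp: not_essential_def)
    qed
    then obtain L where L: "\<And>k j. ((\<lambda>w. matrix_inv (\<psi> w) $ k $ j) \<longlongrightarrow> L k j) (at z)" by metis
    have t1: "((\<lambda>w. cmabs (matrix_inv (\<psi> w))) \<longlongrightarrow> cmabs (\<chi> k j. L k j)) (at z)"
      unfolding tendsto_cm_iff using L by simp
    have t2: "((\<lambda>w. cmabs (\<psi> w)) \<longlongrightarrow> cmabs (\<psi> z)) (at z)"
      unfolding tendsto_cm_iff using isCont_entry[OF cont_psi] zP by (simp add: isCont_def)
    have "((\<lambda>w. cmabs (\<psi> w) * cmabs (matrix_inv (\<psi> w))) \<longlongrightarrow> cmabs (\<psi> z) * cmabs (\<chi> k j. L k j)) (at z)"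
      by (rule tendsto_mult[OF t2 t1])
    moreover have "\<forall>\<^sub>F w in at z. cmabs (\<psi> w) * cmabs (matrix_inv (\<psi> w)) = 1"
      using ev
    proof eventually_elim
      case (elim w)
      hence "invertible (\<psi> w)" using det_nz_out invertible_det_nz by blast
      thus ?case using minv[of "\<psi> w"] by (simp add: rep_inject' rep_times one_cm.rep_eq)
    qed
    ultimately have "((\<lambda>w. 1) \<longlongrightarrow> cmabs (\<psi> z) * cmabs (\<chi> k j. L k j)) (at z)"
      by (rule Lim_transform_eventually)
    hence "cmabs (\<psi> z) * cmabs (\<chi> k j. L k j) = 1"
      by (rule tendsto_unique[OF at_neq_bot _ tendsto_const])
    from arg_cong[OF this, of rep] have "\<psi> z ** (\<chi> k j. L k j) = mat 1"
      by (simp only: rep_times one_cm.rep_eq)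
    hence "invertible (\<psi> z)" using invertible_right_inverse by blast
    thus False using d0 invertible_det_nz by blast
  qed
qed

end


context psi_ctx begin
lemma hol_inv_S: "(\<lambda>w. matrix_inv (\<psi> w) $ k $ j) holomorphic_on S"
  by (rule inv_holo[OF open_S S_nPP det_S])

lemma hol_dpsi: "(\<lambda>w. mat_deriv \<psi> w $ i $ j) holomorphic_on - PP"
proof -
  have "deriv (\<lambda>w. \<psi> w $ i $ j) holomorphic_on - PP"
    by (rule holomorphic_deriv[OF hol_psi open_nPP])
  thus ?thesis by (simp add: mat_deriv_def)
qed

definition "p w = cmabs (\<psi> w)"
definition "pinv w = cmabs (matrix_inv (\<psi> w))"
definition "dp w = cmabs (mat_deriv \<psi> w)"
definition "F w = pinv w * dp w"

lemma rep_F: "rep (F w) = matrix_inv (\<psi> w) ** mat_deriv \<psi> w"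
  by (simp add: F_def pinv_def dp_def rep_times)

lemma hol_F: "(\<lambda>w. (matrix_inv (\<psi> w) ** mat_deriv \<psi> w) $ i $ j) holomorphic_on S"
  unfolding matrix_matrix_mult_def using hol_inv_S holomorphic_on_subset[OF hol_dpsi S_nPP]
  by (simp, intro holomorphic_intros) auto

lemma cder_p: "z \<in> S \<Longrightarrow> cder p (dp z) z"
  unfolding cder_iff p_def dp_def
  using S_nPP by (auto simp: mat_deriv_def intro!: holomorphic_derivI[OF hol_psi open_nPP])

lemma p_pinv: "z \<in> S \<Longrightarrow> p z * pinv z = 1 \<and> pinv z * p z = 1"
  using minv[of "\<psi> z"] det_S[of z] invertible_det_nz[of "\<psi> z"]
  by (simp add: p_def pinv_def rep_inject' rep_times one_cm.rep_eq)

lemma comm_p: "z \<in> S \<Longrightarrow> w \<in> S \<Longrightarrow> p z * p w = p w * p z"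
  using S_nPP comm[of z w] by (auto simp: p_def rep_inject' rep_times PP_def)

lemma comm_dp_p: assumes z: "z \<in> S" and w: "w \<in> S" shows "dp z * p w = p w * dp z"
proof -
  let ?g = "\<lambda>u. p u * p w - p w * p u"
  have "cder ?g (dp z * p w + p z * 0 - (0 * p z + p w * dp z)) z"
    by (intro cder_diff cder_mult cder_p[OF z] cder_const)
  moreover have "cder ?g 0 z"
  proof (rule cder_cong[OF cder_const])
    have "eventually (\<lambda>u. u \<in> S) (at z)" using open_S z by (rule eventually_at_in_open')
    thus "\<forall>\<^sub>F u in at z. 0 = p u * p w - p w * p u" by eventually_elim (use comm_p w in auto)
    show "0 = p z * p w - p w * p z" using comm_p z w by simp
  qed
  ultimately have "dp z * p w - p w * dp z = 0" using cder_unique by fastforce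
  thus ?thesis by simp
qed

lemma comm_dp_dp: assumes z: "z \<in> S" and w: "w \<in> S" shows "dp z * dp w = dp w * dp z"
proof -
  let ?g = "\<lambda>u. dp z * p u - p u * dp z"
  have "cder ?g (0 * p w + dp z * dp w - (dp w * dp z + p w * 0)) w"
    by (intro cder_diff cder_mult cder_p[OF w] cder_const)
  moreover have "cder ?g 0 w"
  proof (rule cder_cong[OF cder_const])
    have "eventually (\<lambda>u. u \<in> S) (at w)" using open_S w by (rule eventually_at_in_open')
    thus "\<forall>\<^sub>F u in at w. 0 = dp z * p u - p u * dp z" by eventually_elim (use comm_dp_p z in auto)
    show "0 = dp z * p w - p w * dp z" using comm_dp_p z w by simp
  qed
  ultimately have "dp z * dp w - dp w * dp z = 0" using cder_unique by fastforce
  thus ?thesis by simp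
qed

lemma comm_F: assumes z: "z \<in> S" and w: "w \<in> S" shows "F z * F w = F w * F z"
proof -
  have i1: "pinv z * p w = p w * pinv z" using inv_comm[OF _ _ comm_p[OF z w]] p_pinv[OF z] by blast
  have i2: "pinv z * dp w = dp w * pinv z" using inv_comm[OF _ _ comm_dp_p[OF w z, symmetric]] p_pinv[OF z] by blast
  have i3: "pinv w * dp z = dp z * pinv w" using inv_comm[OF _ _ comm_dp_p[OF z w, symmetric]] p_pinv[OF w] by blast
  have i4: "pinv z * pinv w = pinv w * pinv z" using inv_comm[OF _ _ i1[symmetric]] p_pinv[OF w] by metis
  have i5: "dp z * dp w = dp w * dp z" by (rule comm_dp_dp[OF z w])
  have "F z * F w = pinv z * (dp z * pinv w) * dp w" by (simp add: F_def mult.assoc)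
  also have "\<dots> = pinv z * pinv w * (dp z * dp w)" by (simp add: i3[symmetric] mult.assoc)
  also have "\<dots> = pinv w * pinv z * (dp w * dp z)" by (simp add: i4 i5)
  also have "\<dots> = pinv w * (pinv z * dp w) * dp z" by (simp add: mult.assoc)
  also have "\<dots> = F w * F z" by (simp add: F_def i2 mult.assoc)
  finally show ?thesis .
qed

end



context psi_ctx
begin

abbreviation "fint i j w \<equiv> (matrix_inv (\<psi> w) ** mat_deriv \<psi> w) $ i $ j"

lemma prim_ex: "\<exists>g. \<forall>x\<in>S. (g has_field_derivative fint i j x) (at x)"
proof (rule holomorphic_starlike_primitive[where k = "{}"])
  show "continuous_on S (fint i j)" by (rule holomorphic_on_imp_continuous_on[OF hol_F])
  show "\<And>x. x \<in> S - {} \<Longrightarrow> fint i j field_differentiable at x"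
    using holomorphic_on_imp_differentiable_at[OF hol_F open_S] by blast
qed (use starlike_S open_S in auto)

definition "G i j = (SOME g. \<forall>x\<in>S. (g has_field_derivative fint i j x) (at x))"

lemma G_deriv: "x \<in> S \<Longrightarrow> (G i j has_field_derivative fint i j x) (at x)"
  using someI_ex[OF prim_ex[of i j]] unfolding G_def by blast

definition "Hm w = (\<chi> i j. G i j w - G i j 0)"
definition "h w = cmabs (Hm w)"

lemma Hm_deriv: "w \<in> S \<Longrightarrow> ((\<lambda>z. Hm z $ i $ j) has_field_derivative fint i j w) (at w)"
  unfolding Hm_def using G_deriv[of w i j] by (auto intro!: derivative_eq_intros)

lemma Hm0: "Hm 0 = 0" by (simp add: Hm_def vec_eq_iff)

lemma h0: "h 0 = 0" by (simp add: h_def Hm0 zero_cm_def)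

lemma hol_Hm: "(\<lambda>z. Hm z $ i $ j) holomorphic_on S"
  using Hm_deriv open_S by (auto simp: holomorphic_on_open)

lemma cder_h: "w \<in> S \<Longrightarrow> cder h (F w) w"
  unfolding cder_iff h_def rep_F by (simp add: Hm_deriv)

lemma comm_F_h: assumes z: "z \<in> S" and w: "w \<in> S" shows "F z * h w = h w * F z"
proof -
  let ?g = "\<lambda>u. F z * h u - h u * F z"
  have "?g w = ?g 0"
  proof (rule cder_zero_const[OF conn_S open_S _ zero_S w])
    fix u assume u: "u \<in> S"
    have "cder ?g (0 * h u + F z * F u - (F u * F z + h u * 0)) u"
      by (intro cder_diff cder_mult cder_h[OF u] cder_const)
    thus "cder ?g 0 u" using comm_F[OF z u] by simp
  qed
  thus ?thesis by (simp add: h0)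
qed

lemma comm_h: assumes z: "z \<in> S" and w: "w \<in> S" shows "h z * h w = h w * h z"
proof -
  let ?g = "\<lambda>u. h u * h w - h w * h u"
  have "?g z = ?g 0"
  proof (rule cder_zero_const[OF conn_S open_S _ zero_S z])
    fix u assume u: "u \<in> S"
    have "cder ?g (F u * h w + h u * 0 - (0 * h u + h w * F u)) u"
      by (intro cder_diff cder_mult cder_h[OF u] cder_const)
    thus "cder ?g 0 u" using comm_F_h[OF u w] by simp
  qed
  thus ?thesis by (simp add: h0)
qed

lemma p0: "p 0 = 1" by (simp add: p_def psi0 one_cm_def)

lemma exp_h: assumes w: "w \<in> S" shows "exp (h w) = p w"
proof -
  let ?E = "\<lambda>u. exp (- h u) * p u"
  have "?E w = ?E 0"
  proof (rule cder_zero_const[OF conn_S open_S _ zero_S w])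
    fix z assume z: "z \<in> S"
    have ev: "eventually (\<lambda>u. (- h u) * (- h z) = (- h z) * (- h u)) (at z)"
      using eventually_at_in_open'[OF open_S z] by eventually_elim (use comm_h z in auto)
    have "cder ?E (exp (- h z) * (- F z) * p z + exp (- h z) * dp z) z"
      by (intro cder_mult cder_exp cder_minus cder_h z cder_p ev)
    moreover have "F z * p z = dp z"
    proof -
      have "F z * p z = pinv z * (dp z * p z)" by (simp add: F_def mult.assoc)
      also have "\<dots> = pinv z * p z * dp z" by (simp add: comm_dp_p[OF z z] mult.assoc)
      also have "\<dots> = dp z" using p_pinv[OF z] by simp
      finally show ?thesis .
    qed
    ultimately show "cder ?E 0 z" by (simp add: mult.assoc)
  qed
  hence e: "exp (- h w) * p w = 1" by (simp add: h0 p0)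
  have "exp (h w) * exp (- h w) = 1"
    using exp_add_commuting[of "h w" "- h w"] by simp
  hence "exp (h w) = exp (h w) * (exp (- h w) * p w)" using e by simp
  also have "\<dots> = p w" using \<open>exp (h w) * exp (- h w) = 1\<close> by (simp add: mult.assoc[symmetric])
  finally show ?thesis .
qed

lemma mat_exp_Hm: "w \<in> S \<Longrightarrow> mat_exp (Hm w) = \<psi> w"
  using exp_h[of w] by (simp add: mat_exp_cmabs h_def[symmetric] p_def)

lemma log_branch_Hm: "log_branch \<psi> Hm"
  unfolding log_branch_def mat_holomorphic_on_def S_def[symmetric]
  using hol_Hm mat_exp_Hm Hm0 by auto

lemma unique:
  assumes lb: "log_branch \<psi> H'" and w: "w \<in> S"
  shows "H' w = Hm w"
proof -
  have holH': "(\<lambda>z. H' z $ i $ j) holomorphic_on S" for i j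
    using lb by (simp add: log_branch_def mat_holomorphic_on_def S_def)
  have expH': "z \<in> S \<Longrightarrow> mat_exp (H' z) = \<psi> z" for z
    using lb by (simp add: log_branch_def S_def)
  define g where "g z = cmabs (H' z)" for z
  have g0: "g 0 = 0" using lb by (simp add: g_def log_branch_def zero_cm_def)
  have gc: "(g \<longlongrightarrow> 0) (at 0)"
    unfolding tendsto_cm_iff g_def
  proof (intro allI)
    fix i j
    have "isCont (\<lambda>z. H' z $ i $ j) 0"
      using holomorphic_on_imp_continuous_on[OF holH'] open_S zero_S continuous_on_eq_continuous_at by blast
    thus "((\<lambda>z. rep (cmabs (H' z)) $ i $ j) \<longlongrightarrow> rep 0 $ i $ j) (at 0)"
      using lb by (simp add: isCont_def log_branch_def zero_cm.rep_eq)
  qed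
  have hc: "(h \<longlongrightarrow> 0) (at 0)" using cder_cont[OF cder_h[OF zero_S]] by (simp add: h0)
  have "eventually (\<lambda>z. norm (g z) < 1/4 \<and> norm (h z) < 1/4 \<and> z \<in> S) (at 0)"
  proof -
    have "eventually (\<lambda>z. norm (g z) < 1/4) (at 0)"
      using tendsto_norm[OF gc] by (rule order_tendstoD) simp
    moreover have "eventually (\<lambda>z. norm (h z) < 1/4) (at 0)"
      using tendsto_norm[OF hc] by (rule order_tendstoD) simp
    moreover have "eventually (\<lambda>z. z \<in> S) (at 0)" by (rule eventually_at_in_open'[OF open_S zero_S])
    ultimately show ?thesis by eventually_elim auto
  qed
  then obtain d where d: "d > 0" and dP: "\<And>z. z \<noteq> 0 \<Longrightarrow> dist z 0 < d \<Longrightarrow> norm (g z) < 1/4 \<and> norm (h z) < 1/4 \<and> z \<in> S"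
    unfolding eventually_at by auto
  have P: "norm (g z) < 1/4 \<and> norm (h z) < 1/4 \<and> z \<in> S" if "z \<in> ball 0 d" for z
    using that dP[of z] g0 h0 zero_S by (cases "z = 0") (auto simp: dist_commute)
  have eqb: "H' z = Hm z" if z: "z \<in> ball 0 d" for z
  proof -
    have zS: "z \<in> S" and ng: "norm (g z) < 1/4" and nh: "norm (h z) < 1/4" using P[OF z] by auto
    have eg: "exp (g z) = p z"
      using expH'[OF zS] mat_exp_cmabs[of "H' z"] by (simp add: g_def p_def rep_inject')
    have eh: "exp (h z) = p z" by (rule exp_h[OF zS])
    have "g z * exp (h z) = exp (h z) * g z"
      using exp_times_arg_commute[of "g z"] eg eh by simp
    hence c: "g z * h z = h z * g z" using comm_exp_small[of "h z" "g z"] nh by simp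
    have "exp (g z - h z) = exp (g z) * exp (- h z)"
      using exp_add_commuting[of "g z" "- h z"] c by simp
    also have "\<dots> = exp (h z) * exp (- h z)" using eg eh by simp
    also have "\<dots> = 1" using exp_add_commuting[of "h z" "- h z"] by simp
    finally have "exp (g z - h z) = 1" .
    moreover have "norm (g z - h z) < 1/2"
      using norm_triangle_ineq4[of "g z" "h z"] ng nh by linarith
    ultimately have "g z - h z = 0" using exp_eq_one_small by blast
    hence "g z = h z" by simp
    thus ?thesis by (simp add: g_def h_def cmabs_inject)
  qed
  have "H' w $ i $ j = Hm w $ i $ j" for i j
  proof (rule analytic_continuation_open[where s = "ball 0 d" and s' = S and f = "\<lambda>z. H' z $ i $ j" and g = "\<lambda>z. Hm z $ i $ j" and z = w])
    show "ball 0 d \<subseteq> S" using P by blast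
    show "\<And>z. z \<in> ball 0 d \<Longrightarrow> H' z $ i $ j = Hm z $ i $ j" using eqb by simp
  qed (use d holH' hol_Hm open_S conn_S w in auto)
  thus ?thesis by (simp add: vec_eq_iff)
qed

end


theorem proposition8p4:
  fixes \<psi> :: "complex \<Rightarrow> complex^'n^'n"
  assumes rat: "rational_mat_fun \<psi>"
    and regular: "\<And>z. \<not> mat_pole \<psi> z \<Longrightarrow> isCont \<psi> z"
    and reg0: "\<not> mat_pole \<psi> 0"
    and reg_inf: "\<exists>L. (\<psi> \<longlongrightarrow> L) at_infinity"
    and psi0: "\<psi> 0 = mat 1"
    and comm: "\<And>w w'. \<not> mat_pole \<psi> w \<Longrightarrow> \<not> mat_pole \<psi> w' \<Longrightarrow> \<psi> w ** \<psi> w' = \<psi> w' ** \<psi> w"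
  shows "\<exists>H. log_branch \<psi> H
            \<and> (\<forall>H'. log_branch \<psi> H' \<longrightarrow> (\<forall>w \<in> - Yset \<psi>. H' w = H w))
            \<and> (\<forall>w \<in> - Yset \<psi>. \<forall>w' \<in> - Yset \<psi>. H w ** H w' = H w' ** H w)
            \<and> (\<forall>w \<in> - Yset \<psi>. \<forall>i j. ((\<lambda>z. H z $ i $ j) has_field_derivative
                   (matrix_inv (\<psi> w) ** mat_deriv \<psi> w) $ i $ j) (at w))"
proof -
  obtain P q where q: "q \<noteq> 0"
    and pq: "\<forall>w. poly q w \<noteq> 0 \<longrightarrow> \<psi> w = (\<chi> i j. poly (P $ i $ j) w / poly q w)"
    using rat unfolding rational_mat_fun_def by blast
  interpret psi_ctx \<psi> P q
    using q pq regular reg0 psi0 comm by unfold_locales auto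
  have uq: "\<forall>H'. log_branch \<psi> H' \<longrightarrow> (\<forall>w \<in> - Yset \<psi>. H' w = Hm w)"
    using unique by (simp add: S_def)
  have cm: "\<forall>w \<in> - Yset \<psi>. \<forall>w' \<in> - Yset \<psi>. Hm w ** Hm w' = Hm w' ** Hm w"
  proof (intro ballI)
    fix w w' assume "w \<in> - Yset \<psi>" "w' \<in> - Yset \<psi>"
    hence "h w * h w' = h w' * h w" using comm_h by (simp add: S_def)
    from arg_cong[OF this, of rep] show "Hm w ** Hm w' = Hm w' ** Hm w"
      by (simp add: h_def rep_times)
  qed
  have dv: "\<forall>w \<in> - Yset \<psi>. \<forall>i j. ((\<lambda>z. Hm z $ i $ j) has_field_derivative
                   (matrix_inv (\<psi> w) ** mat_deriv \<psi> w) $ i $ j) (at w)"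
    using Hm_deriv by (simp add: S_def)
  show ?thesis using log_branch_Hm uq cm dv by blast
qed

end
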